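(* Let $P$ be an orthogonal polygon without holes, let $\mathcal{R}$ be a partial solution for $P$ which does not completely cover $P$, and let $S$ be any valid square. Define $D_x=\{(x,y)\in\mathbb{Z}^2 : \exists x' \text{ that is the } x\text{-coordinate of a vertex of } P \text{ or of a corner of a rec-pack in } \mathcal{R}\cup\{S\} \text{ with } |x-x'|\le 1, \text{ and } y \text{ is the } y\text{-coordinate of a vertex of } P\}$ and $D_y=\{(x,y)\in\mathbb{Z}^2 : \exists y' \text{ that is the } y\text{-coordinate of a vertex of } P \text{ or of a corner of a rec-pack in } \mathcal{R}\cup\{S\} \text{ with } |y-y'|\le 1, \text{ and } x \text{ is the } x\text{-coordinate of a vertex of } P\}$. Let $p,p_1$ be adjacent nodes of $G^{\mathcal{R}}(P)$ such that $p$ lies in $S$ and $p_1$ does not lie in $S$. Then there is a neighbour $p'$ of $p$ in $G^{\mathcal{R}}(P)$ such that $p'$ does not lie in $S$, and $p$ and $p'$ both lie in $S^\star$ for some maximal square $S^\star$ having a corner in $D_x\cup D_y$.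
   Context: $P$ is a simple polygon with integer vertex coordinates and axis-parallel edges. A valid square is an axis-parallel square contained in $P$; it is maximal if no larger-area valid square contains it. A block is a unit square with lattice-point corners lying inside $P$. The associated graph $G(P)$ has the blocks as nodes, two blocks adjacent if some valid square contains both. A rec-pack is an axis-parallel rectangle contained in $P$ of dimensions $t\times \eta t$ or $\eta t\times t$ with $\eta\in\mathbb{N}$ (a valid square is a rec-pack); its extraction $\mathsf{ext}(R)$ is the set of the $\eta$ side-$t$ squares tiling $R$, and $\mathsf{ext}(\mathcal{R})=\bigcup_{R\in\mathcal{R}}\mathsf{ext}(R)$. A set $\mathcal{R}'$ of rec-packs is a minimum covering if $\mathsf{ext}(\mathcal{R}')$ is a minimum-cardinality set of valid squares with union $P$ and distinct rec-packs have disjoint extractions. A partial solution is a subset of some minimum covering. $G^{\mathcal{R}}(P)$ is the subgraph of $G(P)$ induced by the blocks not covered by rec-packs of $\mathcal{R}$. *)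

theory Defs
  imports "HOL-Analysis.Analysis"
begin

type_synonym pt = "real \<times> real"

definition rpt :: "int \<times> int \<Rightarrow> pt" where
  "rpt v = (real_of_int (fst v), real_of_int (snd v))"

fun poly_path :: "pt list \<Rightarrow> real \<Rightarrow> pt" where
  "poly_path [] = linepath 0 0"
| "poly_path [v] = linepath v v"
| "poly_path [v, w] = linepath v w"
| "poly_path (v # w # u # vs) = linepath v w +++ poly_path (w # u # vs)"

definition closed_poly_path :: "(int \<times> int) list \<Rightarrow> real \<Rightarrow> pt" where
  "closed_poly_path vs = poly_path (map rpt (vs @ [hd vs]))"

definition nxt :: "'a list \<Rightarrow> nat \<Rightarrow> 'a" where
  "nxt vs i = vs ! (Suc i mod length vs)"

definition horiz_edge :: "(int \<times> int) list \<Rightarrow> nat \<Rightarrow> bool" where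
  "horiz_edge vs i \<longleftrightarrow> snd (vs ! i) = snd (nxt vs i) \<and> fst (vs ! i) \<noteq> fst (nxt vs i)"

definition vert_edge :: "(int \<times> int) list \<Rightarrow> nat \<Rightarrow> bool" where
  "vert_edge vs i \<longleftrightarrow> fst (vs ! i) = fst (nxt vs i) \<and> snd (vs ! i) \<noteq> snd (nxt vs i)"

text \<open>An orthogonal (simple, hence hole-free) polygon given by its cyclic list of integer
  vertices: every edge is axis-parallel and non-degenerate, horizontal and vertical edges
  alternate (so every listed vertex is a genuine corner), and the boundary is a simple
  closed curve.\<close>
definition ortho_polygon :: "(int \<times> int) list \<Rightarrow> bool" where
  "ortho_polygon vs \<longleftrightarrow> length vs \<ge> 4 \<and>
     (\<forall>i < length vs. (horiz_edge vs i \<or> vert_edge vs i) \<and>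
        (horiz_edge vs i \<longleftrightarrow> vert_edge vs (Suc i mod length vs))) \<and>
     simple_path (closed_poly_path vs)"

definition region :: "(int \<times> int) list \<Rightarrow> pt set" where
  "region vs = path_image (closed_poly_path vs) \<union> inside (path_image (closed_poly_path vs))"

definition sq :: "pt \<Rightarrow> real \<Rightarrow> pt set" where
  "sq c t = cbox c (fst c + t, snd c + t)"

definition valid_square :: "(int \<times> int) list \<Rightarrow> pt set \<Rightarrow> bool" where
  "valid_square vs Q \<longleftrightarrow> (\<exists>c t. t > 0 \<and> Q = sq c t) \<and> Q \<subseteq> region vs"

definition maximal_square :: "(int \<times> int) list \<Rightarrow> pt set \<Rightarrow> bool" where
  "maximal_square vs Q \<longleftrightarrow> valid_square vs Q \<and>
     \<not> (\<exists>Q'. valid_square vs Q' \<and> Q \<subseteq> Q' \<and> measure lebesgue Q' > measure lebesgue Q)"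

definition block :: "int \<times> int \<Rightarrow> pt set" where
  "block p = sq (rpt p) 1"

definition is_block :: "(int \<times> int) list \<Rightarrow> int \<times> int \<Rightarrow> bool" where
  "is_block vs p \<longleftrightarrow> block p \<subseteq> region vs"

definition adjG :: "(int \<times> int) list \<Rightarrow> int \<times> int \<Rightarrow> int \<times> int \<Rightarrow> bool" where
  "adjG vs p q \<longleftrightarrow> is_block vs p \<and> is_block vs q \<and> p \<noteq> q \<and>
     (\<exists>Q. valid_square vs Q \<and> block p \<subseteq> Q \<and> block q \<subseteq> Q)"

definition rec_pack :: "(int \<times> int) list \<Rightarrow> pt set \<Rightarrow> bool" where
  "rec_pack vs R \<longleftrightarrow> R \<subseteq> region vs \<and>
     (\<exists>a b t (\<eta>::nat). t > 0 \<and> \<eta> \<ge> 1 \<and>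
        (R = cbox (a, b) (a + real \<eta> * t, b + t) \<or> R = cbox (a, b) (a + t, b + real \<eta> * t)))"

definition ext :: "pt set \<Rightarrow> pt set set" where
  "ext R = {sq (a + real k * t, b) t | a b t (\<eta>::nat) k.
              t > 0 \<and> k < \<eta> \<and> R = cbox (a, b) (a + real \<eta> * t, b + t)}
         \<union> {sq (a, b + real k * t) t | a b t (\<eta>::nat) k.
              t > 0 \<and> k < \<eta> \<and> R = cbox (a, b) (a + t, b + real \<eta> * t)}"

definition ext_set :: "pt set set \<Rightarrow> pt set set" where
  "ext_set RR = (\<Union>R\<in>RR. ext R)"

definition square_cover :: "(int \<times> int) list \<Rightarrow> pt set set \<Rightarrow> bool" where
  "square_cover vs Q \<longleftrightarrow> finite Q \<and> (\<forall>S\<in>Q. valid_square vs S) \<and> \<Union>Q = region vs"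

definition min_covering :: "(int \<times> int) list \<Rightarrow> pt set set \<Rightarrow> bool" where
  "min_covering vs RR \<longleftrightarrow> (\<forall>R\<in>RR. rec_pack vs R) \<and>
     square_cover vs (ext_set RR) \<and>
     (\<forall>Q. square_cover vs Q \<longrightarrow> card (ext_set RR) \<le> card Q) \<and>
     (\<forall>R1\<in>RR. \<forall>R2\<in>RR. R1 \<noteq> R2 \<longrightarrow> ext R1 \<inter> ext R2 = {})"

definition partial_solution :: "(int \<times> int) list \<Rightarrow> pt set set \<Rightarrow> bool" where
  "partial_solution vs RR \<longleftrightarrow> (\<exists>M. min_covering vs M \<and> RR \<subseteq> M)"

definition uncovered :: "(int \<times> int) list \<Rightarrow> pt set set \<Rightarrow> int \<times> int \<Rightarrow> bool" where
  "uncovered vs RR p \<longleftrightarrow> is_block vs p \<and> \<not> block p \<subseteq> \<Union>RR"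

definition adjGR :: "(int \<times> int) list \<Rightarrow> pt set set \<Rightarrow> int \<times> int \<Rightarrow> int \<times> int \<Rightarrow> bool" where
  "adjGR vs RR p q \<longleftrightarrow> uncovered vs RR p \<and> uncovered vs RR q \<and> adjG vs p q"

definition rect_corners :: "pt set \<Rightarrow> pt set" where
  "rect_corners R = {(x, y) | x y a b c d. R = cbox (a, b) (c, d) \<and> a \<le> c \<and> b \<le> d \<and>
                       (x = a \<or> x = c) \<and> (y = b \<or> y = d)}"

definition D_x :: "(int \<times> int) list \<Rightarrow> pt set set \<Rightarrow> (int \<times> int) set" where
  "D_x vs RR = {(x, y). (\<exists>x'. (x' \<in> real_of_int ` fst ` set vs \<or>
                                (\<exists>R\<in>RR. x' \<in> fst ` rect_corners R)) \<and> \<bar>real_of_int x - x'\<bar> \<le> 1)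
                        \<and> y \<in> snd ` set vs}"

definition D_y :: "(int \<times> int) list \<Rightarrow> pt set set \<Rightarrow> (int \<times> int) set" where
  "D_y vs RR = {(x, y). (\<exists>y'. (y' \<in> real_of_int ` snd ` set vs \<or>
                                (\<exists>R\<in>RR. y' \<in> snd ` rect_corners R)) \<and> \<bar>real_of_int y - y'\<bar> \<le> 1)
                        \<and> x \<in> fst ` set vs}"

end

theory Submission
  imports Defs
begin

definition validW :: "(int \<times> int \<Rightarrow> bool) \<Rightarrow> int \<Rightarrow> int \<Rightarrow> int \<Rightarrow> bool" where
  "validW Bk a b T \<longleftrightarrow> (\<forall>i j. a \<le> i \<longrightarrow> i < a+T \<longrightarrow> b \<le> j \<longrightarrow> j < b+T \<longrightarrow> Bk (i,j))"

lemma tb_case: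
  fixes Bk Uc InS :: "int \<times> int \<Rightarrow> bool" and X :: "int set" and XR :: "real set"
    and sx sy st :: real and a b T px py :: int
  assumes h1: "\<And>i j. i \<notin> X \<Longrightarrow> Bk (i-1,j) = Bk (i,j)"
    and h4: "\<And>i j. Uc (i,j) \<Longrightarrow> Bk (i-1,j) \<Longrightarrow> \<not> Uc (i-1,j) \<Longrightarrow> \<exists>c\<in>XR. i \<le> c \<and> c < i+1"
    and h5: "\<And>i j. Uc (i,j) \<Longrightarrow> Bk (i+1,j) \<Longrightarrow> \<not> Uc (i+1,j) \<Longrightarrow> \<exists>c\<in>XR. i < c \<and> c \<le> i+1"
    and hS: "\<And>i j. InS (i,j) = (sx \<le> i \<and> i+1 \<le> sx+st \<and> sy \<le> j \<and> j+1 \<le> sy+st)"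
    and hSB: "\<And>c. InS c \<Longrightarrow> Bk c"
    and hsx: "sx \<in> XR" "sx+st \<in> XR"
    and T: "T \<ge> 1"
    and hp: "InS (px,py)" "b \<le> py" "py < b+T"
    and G: "validW Bk a b T" "\<exists>c. a \<le> c \<and> c < a+T \<and> \<not> Bk (c,b+T)"
       "\<exists>c. a \<le> c \<and> c < a+T \<and> \<not> Bk (c,b-1)" "a \<le> px" "px < a+T"
       "\<exists>i j. a \<le> i \<and> i < a+T \<and> b \<le> j \<and> j < b+T \<and> Uc (i,j) \<and> \<not> InS (i,j)"
  shows "\<exists>a'. validW Bk a' b T \<and> (\<exists>c. a' \<le> c \<and> c < a'+T \<and> \<not> Bk (c,b+T)) \<and>
       (\<exists>c. a' \<le> c \<and> c < a'+T \<and> \<not> Bk (c,b-1)) \<and> a' \<le> px \<and> px < a'+T \<and>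
       (\<exists>i j. a' \<le> i \<and> i < a'+T \<and> b \<le> j \<and> j < b+T \<and> Uc (i,j) \<and> \<not> InS (i,j)) \<and>
       (\<exists>x'\<in>real_of_int ` X \<union> XR. \<bar>real_of_int a' - x'\<bar> \<le> 1 \<or> \<bar>real_of_int (a'+T) - x'\<bar> \<le> 1)"
proof (rule ccontr)
  define Good where "Good a' \<longleftrightarrow> validW Bk a' b T \<and> (\<exists>c. a' \<le> c \<and> c < a'+T \<and> \<not> Bk (c,b+T)) \<and>
       (\<exists>c. a' \<le> c \<and> c < a'+T \<and> \<not> Bk (c,b-1)) \<and> a' \<le> px \<and> px < a'+T \<and>
       (\<exists>i j. a' \<le> i \<and> i < a'+T \<and> b \<le> j \<and> j < b+T \<and> Uc (i,j) \<and> \<not> InS (i,j))" for a'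
  define Cor where "Cor a' \<longleftrightarrow> (\<exists>x'\<in>real_of_int ` X \<union> XR. \<bar>real_of_int a' - x'\<bar> \<le> 1 \<or> \<bar>real_of_int (a'+T) - x'\<bar> \<le> 1)" for a'
  assume "\<not> ?thesis"
  hence ncor: "\<And>a'. Good a' \<Longrightarrow> \<not> Cor a'" unfolding Good_def Cor_def by blast
  have nX: "x \<noteq> a'-1 \<and> x \<noteq> a' \<and> x \<noteq> a'+1 \<and> x \<noteq> a'+T-1 \<and> x \<noteq> a'+T \<and> x \<noteq> a'+T+1"
    if "\<not> Cor a'" "x \<in> X" for a' x
  proof -
    have "\<bar>real_of_int a' - real_of_int x\<bar> > 1" "\<bar>real_of_int (a'+T) - real_of_int x\<bar> > 1"
      using that unfolding Cor_def by force+
    thus ?thesis by auto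
  qed
  have nR: "\<bar>real_of_int a' - c\<bar> > 1 \<and> \<bar>real_of_int (a'+T) - c\<bar> > 1"
    if "\<not> Cor a'" "c \<in> XR" for a' c
    using that unfolding Cor_def by force
  have sxp: "sx \<le> px" "px + 1 \<le> sx + st" "sy \<le> py" "py + 1 \<le> sy + st" using hp(1) hS by auto
  have L: "Good (a'-1)" if g: "Good a'" and pl: "px \<le> a'+T-2" for a'
  proof -
    have nc: "\<not> Cor a'" using ncor g by blast
    note nx = nX[OF nc] and nr = nR[OF nc]
    have v: "validW Bk a' b T" using g unfolding Good_def by blast
    have v': "validW Bk (a'-1) b T"
      unfolding validW_def
    proof (intro allI impI)
      fix i j assume "a'-1 \<le> i" "i < a'-1+T" "b \<le> j" "j < b+T"
      show "Bk (i,j)"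
      proof (cases "i = a'-1")
        case True
        have "a' \<notin> X" using nx by blast
        from h1[OF this, of j] v \<open>b \<le> j\<close> \<open>j < b+T\<close> T True show ?thesis unfolding validW_def by auto
      next
        case False thus ?thesis using v \<open>a'-1 \<le> i\<close> \<open>i < a'-1+T\<close> \<open>b \<le> j\<close> \<open>j < b+T\<close> unfolding validW_def by auto
      qed
    qed
    have shift: "\<exists>c. a'-1 \<le> c \<and> c < a'-1+T \<and> \<not> Bk (c,y)" if ex: "\<exists>c. a' \<le> c \<and> c < a'+T \<and> \<not> Bk (c,y)" for y
    proof -
      obtain c where c: "a' \<le> c" "c < a'+T" "\<not> Bk (c,y)" using ex by blast
      show ?thesis
      proof (cases "c = a'+T-1")
        case True
        have "a'+T-1 \<notin> X" using nx by blast
        from h1[OF this, of y] c True have "\<not> Bk (a'+T-2, y)" by (simp add: algebra_simps)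
        thus ?thesis using T by (intro exI[of _ "a'+T-2"]) auto
      next
        case False thus ?thesis using c by (intro exI[of _ c]) auto
      qed
    qed
    have top: "\<exists>c. a'-1 \<le> c \<and> c < a'-1+T \<and> \<not> Bk (c,b+T)"
      using shift g unfolding Good_def by blast
    have bot: "\<exists>c. a'-1 \<le> c \<and> c < a'-1+T \<and> \<not> Bk (c,b-1)"
      using shift g unfolding Good_def by blast
    obtain i j where w: "a' \<le> i" "i < a'+T" "b \<le> j" "j < b+T" "Uc (i,j)" "\<not> InS (i,j)"
      using g unfolding Good_def by blast
    have apx: "a' \<le> px" "px < a'+T" using g unfolding Good_def by auto
    have wit: "\<exists>i j. a'-1 \<le> i \<and> i < a'-1+T \<and> b \<le> j \<and> j < b+T \<and> Uc (i,j) \<and> \<not> InS (i,j)"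
    proof (cases "i = a'+T-1")
      case False thus ?thesis using w by (intro exI[of _ i] exI[of _ j]) auto
    next
      case True
      have Bk1: "Bk (i-1,j)" using v w True apx pl unfolding validW_def by auto
      have nS: "\<not> InS (i-1,j)"
      proof
        assume "InS (i-1,j)"
        hence ij: "sx \<le> i-1" "i \<le> sx+st" "sy \<le> j" "j+1 \<le> sy+st" using hS by auto
        have "\<not> (i+1 \<le> sx+st)" using w(6) ij hS by auto
        hence "\<bar>real_of_int (a'+T) - (sx+st)\<bar> \<le> 1" using ij True by auto
        thus False using nr[OF hsx(2)] by linarith
      qed
      have U: "Uc (i-1,j)"
      proof (rule ccontr)
        assume "\<not> Uc (i-1,j)"
        then obtain c :: real where "c \<in> XR" "i \<le> c" "c < real_of_int i + 1" using h4[OF w(5) Bk1] by blast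
        thus False using nr True by force
      qed
      show ?thesis using w True Bk1 nS U apx pl by (intro exI[of _ "i-1"] exI[of _ j]) auto
    qed
    show ?thesis unfolding Good_def using v' top bot wit apx pl by auto
  qed
  have R: "Good (a'+1)" if g: "Good a'" and pl: "a'+1 \<le> px" for a'
  proof -
    have nc: "\<not> Cor a'" using ncor g by blast
    note nx = nX[OF nc] and nr = nR[OF nc]
    have v: "validW Bk a' b T" using g unfolding Good_def by blast
    have v': "validW Bk (a'+1) b T"
      unfolding validW_def
    proof (intro allI impI)
      fix i j assume "a'+1 \<le> i" "i < a'+1+T" "b \<le> j" "j < b+T"
      show "Bk (i,j)"
      proof (cases "i = a'+T")
        case True
        have "a'+T \<notin> X" using nx by blast
        from h1[OF this, of j] v \<open>b \<le> j\<close> \<open>j < b+T\<close> T True show ?thesis unfolding validW_def by auto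
      next
        case False thus ?thesis using v \<open>a'+1 \<le> i\<close> \<open>i < a'+1+T\<close> \<open>b \<le> j\<close> \<open>j < b+T\<close> unfolding validW_def by auto
      qed
    qed
    have shift: "\<exists>c. a'+1 \<le> c \<and> c < a'+1+T \<and> \<not> Bk (c,y)" if ex: "\<exists>c. a' \<le> c \<and> c < a'+T \<and> \<not> Bk (c,y)" for y
    proof -
      obtain c where c: "a' \<le> c" "c < a'+T" "\<not> Bk (c,y)" using ex by blast
      show ?thesis
      proof (cases "c = a'")
        case True
        have "a'+1 \<notin> X" using nx by blast
        from h1[OF this, of y] c True have "\<not> Bk (a'+1, y)" by (simp add: algebra_simps)
        thus ?thesis using T by (intro exI[of _ "a'+1"]) auto
      next
        case False thus ?thesis using c by (intro exI[of _ c]) auto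
      qed
    qed
    have top: "\<exists>c. a'+1 \<le> c \<and> c < a'+1+T \<and> \<not> Bk (c,b+T)"
      using shift g unfolding Good_def by blast
    have bot: "\<exists>c. a'+1 \<le> c \<and> c < a'+1+T \<and> \<not> Bk (c,b-1)"
      using shift g unfolding Good_def by blast
    obtain i j where w: "a' \<le> i" "i < a'+T" "b \<le> j" "j < b+T" "Uc (i,j)" "\<not> InS (i,j)"
      using g unfolding Good_def by blast
    have apx: "a' \<le> px" "px < a'+T" using g unfolding Good_def by auto
    have wit: "\<exists>i j. a'+1 \<le> i \<and> i < a'+1+T \<and> b \<le> j \<and> j < b+T \<and> Uc (i,j) \<and> \<not> InS (i,j)"
    proof (cases "i = a'")
      case False thus ?thesis using w by (intro exI[of _ i] exI[of _ j]) auto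
    next
      case True
      have Bk1: "Bk (i+1,j)" using v w True apx pl unfolding validW_def by auto
      have nS: "\<not> InS (i+1,j)"
      proof
        assume "InS (i+1,j)"
        hence ij: "sx \<le> i+1" "i+2 \<le> sx+st" "sy \<le> j" "j+1 \<le> sy+st" using hS by auto
        have "\<not> (sx \<le> i)" using w(6) ij hS by auto
        hence "\<bar>real_of_int a' - sx\<bar> \<le> 1" using ij True by auto
        thus False using nr[OF hsx(1)] by linarith
      qed
      have U: "Uc (i+1,j)"
      proof (rule ccontr)
        assume "\<not> Uc (i+1,j)"
        then obtain c :: real where "c \<in> XR" "i < c" "c \<le> real_of_int i + 1" using h5[OF w(5) Bk1] by blast
        thus False using nr True by force
      qed
      show ?thesis using w True Bk1 nS U apx pl by (intro exI[of _ "i+1"] exI[of _ j]) auto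
    qed
    show ?thesis unfolding Good_def using v' top bot wit apx pl by auto
  qed
  have G0: "Good a" unfolding Good_def using G by blast
  have Ln: "a - int n \<ge> px-T+1 \<longrightarrow> Good (a - int n)" for n
  proof (induction n)
    case 0 then show ?case using G0 by simp
  next
    case (Suc n)
    show ?case
    proof
      assume "a - int (Suc n) \<ge> px-T+1"
      hence "Good (a - int n)" "px \<le> (a - int n)+T-2" using Suc by auto
      from L[OF this] show "Good (a - int (Suc n))" by (simp add: algebra_simps)
    qed
  qed
  have Rn: "a + int n \<le> px \<longrightarrow> Good (a + int n)" for n
  proof (induction n)
    case 0 then show ?case using G0 by simp
  next
    case (Suc n)
    show ?case
    proof
      assume "a + int (Suc n) \<le> px"
      hence "Good (a + int n)" "(a + int n)+1 \<le> px" using Suc by auto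
      from R[OF this] show "Good (a + int (Suc n))" by (simp add: algebra_simps)
    qed
  qed
  have allG: "Good a'" if "px-T+1 \<le> a'" "a' \<le> px" for a'
  proof (cases "a' \<le> a")
    case True
    from Ln[of "nat (a - a')"] True that show ?thesis by simp
  next
    case False
    from Rn[of "nat (a' - a)"] False that show ?thesis by simp
  qed
  have far: "\<bar>real_of_int k - x'\<bar> > 1" if "px-T+1 \<le> k" "k \<le> px+T" "x' \<in> XR" for k x'
  proof (cases "k \<le> px")
    case True
    hence "\<not> Cor k" using ncor allG that by auto
    thus ?thesis using nR that by blast
  next
    case False
    hence "\<not> Cor (k-T)" using ncor allG that by auto
    thus ?thesis using nR[of "k-T" x'] that by auto
  qed
  have s1: "sx < px - T"
  proof (rule ccontr)
    assume "\<not> sx < px - T"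
    define k where "k = floor sx + 1"
    have "px - T \<le> floor sx" using \<open>\<not> sx < px - T\<close> by linarith
    moreover have "floor sx \<le> px" using sxp by linarith
    ultimately have "px-T+1 \<le> k" "k \<le> px+T" using T unfolding k_def by auto
    moreover have "\<bar>real_of_int k - sx\<bar> \<le> 1" unfolding k_def by linarith
    ultimately show False using far hsx by force
  qed
  have s2: "sx + st > px + T + 1"
  proof (rule ccontr)
    assume a2: "\<not> sx + st > px + T + 1"
    define k where "k = min (floor (sx+st)) (px+T)"
    have "px + 1 \<le> floor (sx+st)" using sxp by linarith
    hence "px-T+1 \<le> k" "k \<le> px+T" using T unfolding k_def by auto
    moreover have "\<bar>real_of_int k - (sx+st)\<bar> \<le> 1" unfolding k_def using a2 by linarith
    ultimately show False using far hsx by force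
  qed
  have gp: "Good px" using allG T by auto
  obtain c where c: "px \<le> c" "c < px+T" "\<not> Bk (c,b+T)" using gp unfolding Good_def by blast
  obtain c' where c': "px \<le> c'" "c' < px+T" "\<not> Bk (c',b-1)" using gp unfolding Good_def by blast
  have "\<not> InS (c,b+T)" using c hSB by blast
  hence y1: "sy + st < b+T+1" using hS[of c "b+T"] c s1 s2 sxp hp by auto
  have "\<not> InS (c',b-1)" using c' hSB by blast
  hence y2: "sy > b - 1" using hS[of c' "b-1"] c' s1 s2 sxp hp by auto
  show False using y1 y2 s1 s2 T by linarith
qed


definition imax :: "(int \<times> int \<Rightarrow> bool) \<Rightarrow> int \<Rightarrow> int \<Rightarrow> int \<Rightarrow> bool" where
  "imax Bk a b T \<longleftrightarrow> validW Bk a b T \<and>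
     (\<forall>a' b'. (a' = a-1 \<or> a' = a) \<longrightarrow> (b' = b-1 \<or> b' = b) \<longrightarrow> \<not> validW Bk a' b' (T+1))"

lemma tb_imax:
  assumes "validW Bk a b T" "\<exists>c. a \<le> c \<and> c < a+T \<and> \<not> Bk (c,b+T)"
       "\<exists>c. a \<le> c \<and> c < a+T \<and> \<not> Bk (c,b-1)"
  shows "imax Bk a b T"
  unfolding imax_def
proof (intro conjI allI impI)
  show "validW Bk a b T" using assms by simp
  fix a' b' assume a': "a' = a-1 \<or> a' = a" and b': "b' = b-1 \<or> b' = b"
  show "\<not> validW Bk a' b' (T+1)"
  proof (cases "b' = b")
    case True
    obtain c where "a \<le> c" "c < a+T" "\<not> Bk (c,b+T)" using assms(2) by blast
    thus ?thesis using a' True unfolding validW_def by (smt (verit))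
  next
    case False
    hence bb: "b' = b-1" using b' by blast
    obtain c where "a \<le> c" "c < a+T" "\<not> Bk (c,b-1)" using assms(3) by blast
    thus ?thesis using a' bb unfolding validW_def
      by (smt (verit))
  qed
qed

lemma lr_imax:
  assumes "validW Bk a b T" "\<exists>c. b \<le> c \<and> c < b+T \<and> \<not> Bk (a+T,c)"
       "\<exists>c. b \<le> c \<and> c < b+T \<and> \<not> Bk (a-1,c)"
  shows "imax Bk a b T"
  unfolding imax_def
proof (intro conjI allI impI)
  show "validW Bk a b T" using assms by simp
  fix a' b' assume a': "a' = a-1 \<or> a' = a" and b': "b' = b-1 \<or> b' = b"
  show "\<not> validW Bk a' b' (T+1)"
  proof (cases "a' = a")
    case True
    obtain c where "b \<le> c" "c < b+T" "\<not> Bk (a+T,c)" using assms(2) by blast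
    thus ?thesis using b' True unfolding validW_def by (smt (verit))
  next
    case False
    hence bb: "a' = a-1" using a' by blast
    obtain c where "b \<le> c" "c < b+T" "\<not> Bk (a-1,c)" using assms(3) by blast
    thus ?thesis using b' bb unfolding validW_def
      by (smt (verit))
  qed
qed


lemma core:
  fixes Bk Uc InS :: "int \<times> int \<Rightarrow> bool" and X Y :: "int set" and XR YR :: "real set"
    and sx sy st :: real and a b T px py qx qy :: int
  assumes h1: "\<And>i j. i \<notin> X \<Longrightarrow> Bk (i-1,j) = Bk (i,j)"
    and h2: "\<And>i j. j \<notin> Y \<Longrightarrow> Bk (i,j-1) = Bk (i,j)"
    and h4: "\<And>i j. Uc (i,j) \<Longrightarrow> Bk (i-1,j) \<Longrightarrow> \<not> Uc (i-1,j) \<Longrightarrow> \<exists>c\<in>XR. i \<le> c \<and> c < i+1"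
    and h5: "\<And>i j. Uc (i,j) \<Longrightarrow> Bk (i+1,j) \<Longrightarrow> \<not> Uc (i+1,j) \<Longrightarrow> \<exists>c\<in>XR. i < c \<and> c \<le> i+1"
    and h6: "\<And>i j. Uc (i,j) \<Longrightarrow> Bk (i,j-1) \<Longrightarrow> \<not> Uc (i,j-1) \<Longrightarrow> \<exists>c\<in>YR. j \<le> c \<and> c < j+1"
    and h7: "\<And>i j. Uc (i,j) \<Longrightarrow> Bk (i,j+1) \<Longrightarrow> \<not> Uc (i,j+1) \<Longrightarrow> \<exists>c\<in>YR. j < c \<and> c \<le> j+1"
    and hS: "\<And>i j. InS (i,j) = (sx \<le> i \<and> i+1 \<le> sx+st \<and> sy \<le> j \<and> j+1 \<le> sy+st)"
    and hSB: "\<And>c. InS c \<Longrightarrow> Bk c"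
    and hsx: "sx \<in> XR" "sx+st \<in> XR" and hsy: "sy \<in> YR" "sy+st \<in> YR"
    and T: "T \<ge> 1" and W: "imax Bk a b T"
    and hp: "InS (px,py)" "a \<le> px" "px < a+T" "b \<le> py" "py < b+T"
    and hq: "Uc (qx,qy)" "\<not> InS (qx,qy)" "a \<le> qx" "qx < a+T" "b \<le> qy" "qy < b+T"
  shows "\<exists>a b T qx qy. T \<ge> 1 \<and> imax Bk a b T \<and> a \<le> px \<and> px < a+T \<and> b \<le> py \<and> py < b+T \<and>
     a \<le> qx \<and> qx < a+T \<and> b \<le> qy \<and> qy < b+T \<and> Uc (qx,qy) \<and> \<not> InS (qx,qy) \<and>
     (\<exists>x y. (x = a \<or> x = a+T) \<and> (y = b \<or> y = b+T) \<and>
        ((y \<in> Y \<and> (\<exists>x'\<in>real_of_int ` X \<union> XR. \<bar>real_of_int x - x'\<bar> \<le> 1)) \<or>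
         (x \<in> X \<and> (\<exists>y'\<in>real_of_int ` Y \<union> YR. \<bar>real_of_int y - y'\<bar> \<le> 1))))"
    (is "\<exists>a b T qx qy. ?P a b T qx qy")
proof -
  have v: "validW Bk a b T" using W unfolding imax_def by blast
  have vc: "Bk (i,j)" if "a \<le> i" "i < a+T" "b \<le> j" "j < b+T" for i j
    using v that unfolding validW_def by blast
  have nv: "\<not> validW Bk a' b' (T+1)" if "a' = a-1 \<or> a' = a" "b' = b-1 \<or> b' = b" for a' b'
    using W that unfolding imax_def by blast
  have doneI: "?thesis" if "x = a \<or> x = a+T" "y = b \<or> y = b+T" "x \<in> X" "y \<in> Y" for x y
  proof -
    have "?P a b T qx qy"
      using T W hp hq that by (intro conjI exI[of _ x] exI[of _ y]) (auto intro!: bexI[of _ "real_of_int x"])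
    thus ?thesis by blast
  qed
  show ?thesis
  proof (cases "(a \<in> X \<or> a+T \<in> X) \<and> (b \<in> Y \<or> b+T \<in> Y)")
    case True
    then obtain x y where "x = a \<or> x = a+T" "y = b \<or> y = b+T" "x \<in> X" "y \<in> Y" by blast
    thus ?thesis by (rule doneI)
  next
    case False
    show ?thesis
    proof (cases "a \<in> X \<or> a+T \<in> X")
      case False
      hence aX: "a \<notin> X" "a+T \<notin> X" by auto
      have top: "\<exists>c. a \<le> c \<and> c < a+T \<and> \<not> Bk (c,b+T)"
      proof (rule ccontr)
        assume nt: "\<not> ?thesis"
        have "validW Bk a b (T+1)" unfolding validW_def
        proof (intro allI impI)
          fix i j assume r: "a \<le> i" "i < a+(T+1)" "b \<le> j" "j < b+(T+1)"
          have col: "Bk (i,j)" if "i < a+T" using nt vc r that by (cases "j = b+T") auto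
          show "Bk (i,j)"
          proof (cases "i = a+T")
            case False thus ?thesis using col r by auto
          next
            case True
            have "Bk (a+T-1,j)" using col[of] r T nt vc by (cases "j = b+T") auto
            thus ?thesis using h1[OF aX(2), of j] True by simp
          qed
        qed
        thus False using nv by blast
      qed
      have bot: "\<exists>c. a \<le> c \<and> c < a+T \<and> \<not> Bk (c,b-1)"
      proof (rule ccontr)
        assume nt: "\<not> ?thesis"
        have "validW Bk a (b-1) (T+1)" unfolding validW_def
        proof (intro allI impI)
          fix i j assume r: "a \<le> i" "i < a+(T+1)" "b-1 \<le> j" "j < b-1+(T+1)"
          have col: "Bk (i,j)" if "i < a+T" using nt vc r that by (cases "j = b-1") auto
          show "Bk (i,j)"
          proof (cases "i = a+T")
            case False thus ?thesis using col r by auto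
          next
            case True
            have "Bk (a+T-1,j)" using r T nt vc by (cases "j = b-1") auto
            thus ?thesis using h1[OF aX(2), of j] True by simp
          qed
        qed
        thus False using nv by blast
      qed
      have wq0: "\<exists>i j. a \<le> i \<and> i < a+T \<and> b \<le> j \<and> j < b+T \<and> Uc (i,j) \<and> \<not> InS (i,j)"
        using hq by blast
      have ex: "\<exists>a'. validW Bk a' b T \<and> (\<exists>c. a' \<le> c \<and> c < a'+T \<and> \<not> Bk (c,b+T)) \<and>
       (\<exists>c. a' \<le> c \<and> c < a'+T \<and> \<not> Bk (c,b-1)) \<and> a' \<le> px \<and> px < a'+T \<and>
       (\<exists>i j. a' \<le> i \<and> i < a'+T \<and> b \<le> j \<and> j < b+T \<and> Uc (i,j) \<and> \<not> InS (i,j)) \<and>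
       (\<exists>x'\<in>real_of_int ` X \<union> XR. \<bar>real_of_int a' - x'\<bar> \<le> 1 \<or> \<bar>real_of_int (a'+T) - x'\<bar> \<le> 1)"
        by (rule tb_case[where Bk=Bk and Uc=Uc and InS=InS and X=X and XR=XR and sx=sx and sy=sy and st=st and T=T and px=px and py=py and a=a and b=b])
          (fact h1 h4 h5 hS hSB hsx T hp v top bot wq0)+
      obtain a' where a'all: "validW Bk a' b T \<and> (\<exists>c. a' \<le> c \<and> c < a'+T \<and> \<not> Bk (c,b+T)) \<and>
       (\<exists>c. a' \<le> c \<and> c < a'+T \<and> \<not> Bk (c,b-1)) \<and> a' \<le> px \<and> px < a'+T \<and>
       (\<exists>i j. a' \<le> i \<and> i < a'+T \<and> b \<le> j \<and> j < b+T \<and> Uc (i,j) \<and> \<not> InS (i,j)) \<and>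
       (\<exists>x'\<in>real_of_int ` X \<union> XR. \<bar>real_of_int a' - x'\<bar> \<le> 1 \<or> \<bar>real_of_int (a'+T) - x'\<bar> \<le> 1)" using ex by blast
      have a': "validW Bk a' b T" "\<exists>c. a' \<le> c \<and> c < a'+T \<and> \<not> Bk (c,b+T)"
        "\<exists>c. a' \<le> c \<and> c < a'+T \<and> \<not> Bk (c,b-1)" "a' \<le> px" "px < a'+T"
        "\<exists>i j. a' \<le> i \<and> i < a'+T \<and> b \<le> j \<and> j < b+T \<and> Uc (i,j) \<and> \<not> InS (i,j)"
        "\<exists>x'\<in>real_of_int ` X \<union> XR. \<bar>real_of_int a' - x'\<bar> \<le> 1 \<or> \<bar>real_of_int (a'+T) - x'\<bar> \<le> 1"
        using a'all by simp_all
      obtain c where c: "a' \<le> c" "c < a'+T" "\<not> Bk (c,b-1)" using a'(3) by blast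
      have "Bk (c,b)" using a'(1) c T unfolding validW_def by auto
      hence bY: "b \<in> Y" using h2[of b c] c by auto
      obtain i j where ij: "a' \<le> i" "i < a'+T" "b \<le> j" "j < b+T" "Uc (i,j)" "\<not> InS (i,j)"
        using a'(6) by blast
      obtain x' where x': "x' \<in> real_of_int ` X \<union> XR" "\<bar>real_of_int a' - x'\<bar> \<le> 1 \<or> \<bar>real_of_int (a'+T) - x'\<bar> \<le> 1"
        using a'(7) by blast
      have im: "imax Bk a' b T" using tb_imax a' by blast
      obtain x where x: "x = a' \<or> x = a'+T" "\<bar>real_of_int x - x'\<bar> \<le> 1" using x'(2) by blast
      have cor: "\<exists>x y. (x = a' \<or> x = a'+T) \<and> (y = b \<or> y = b+T) \<and>
        ((y \<in> Y \<and> (\<exists>x'\<in>real_of_int ` X \<union> XR. \<bar>real_of_int x - x'\<bar> \<le> 1)) \<or>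
         (x \<in> X \<and> (\<exists>y'\<in>real_of_int ` Y \<union> YR. \<bar>real_of_int y - y'\<bar> \<le> 1)))"
        using x x'(1) bY by blast
      have "?P a' b T i j" using T im a'(4,5) hp(4,5) ij cor by blast
      thus ?thesis by blast
    next
      case True
      hence bY: "b \<notin> Y" "b+T \<notin> Y" using False by auto
      have rt: "\<exists>c. b \<le> c \<and> c < b+T \<and> \<not> Bk (a+T,c)"
      proof (rule ccontr)
        assume nt: "\<not> ?thesis"
        have "validW Bk a b (T+1)" unfolding validW_def
        proof (intro allI impI)
          fix i j assume r: "a \<le> i" "i < a+(T+1)" "b \<le> j" "j < b+(T+1)"
          have row: "Bk (i,j)" if "j < b+T" using nt vc r that by (cases "i = a+T") auto
          show "Bk (i,j)"
          proof (cases "j = b+T")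
            case False thus ?thesis using row r by auto
          next
            case True
            have "Bk (i,b+T-1)" using r T nt vc by (cases "i = a+T") auto
            thus ?thesis using h2[OF bY(2), of i] True by simp
          qed
        qed
        thus False using nv by blast
      qed
      have lf: "\<exists>c. b \<le> c \<and> c < b+T \<and> \<not> Bk (a-1,c)"
      proof (rule ccontr)
        assume nt: "\<not> ?thesis"
        have "validW Bk (a-1) b (T+1)" unfolding validW_def
        proof (intro allI impI)
          fix i j assume r: "a-1 \<le> i" "i < a-1+(T+1)" "b \<le> j" "j < b+(T+1)"
          have row: "Bk (i,j)" if "j < b+T" using nt vc r that by (cases "i = a-1") auto
          show "Bk (i,j)"
          proof (cases "j = b+T")
            case False thus ?thesis using row r by auto
          next
            case True
            have "Bk (i,b+T-1)" using r T nt vc by (cases "i = a-1") auto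
            thus ?thesis using h2[OF bY(2), of i] True by simp
          qed
        qed
        thus False using nv by blast
      qed
      define Bk' where "Bk' = (\<lambda>(i::int,j::int). Bk (j,i))"
      define Uc' where "Uc' = (\<lambda>(i::int,j::int). Uc (j,i))"
      define InS' where "InS' = (\<lambda>(i::int,j::int). InS (j,i))"
      have h1': "\<And>i j. i \<notin> Y \<Longrightarrow> Bk' (i-1,j) = Bk' (i,j)" unfolding Bk'_def using h2 by simp
      have h4': "\<And>i j. Uc' (i,j) \<Longrightarrow> Bk' (i-1,j) \<Longrightarrow> \<not> Uc' (i-1,j) \<Longrightarrow> \<exists>c\<in>YR. i \<le> c \<and> c < i+1"
        unfolding Bk'_def Uc'_def using h6 by simp
      have h5': "\<And>i j. Uc' (i,j) \<Longrightarrow> Bk' (i+1,j) \<Longrightarrow> \<not> Uc' (i+1,j) \<Longrightarrow> \<exists>c\<in>YR. i < c \<and> c \<le> i+1"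
        unfolding Bk'_def Uc'_def using h7 by simp
      have hS': "\<And>i j. InS' (i,j) = (sy \<le> i \<and> i+1 \<le> sy+st \<and> sx \<le> j \<and> j+1 \<le> sx+st)"
        unfolding InS'_def using hS by auto
      have hSB': "\<And>c. InS' c \<Longrightarrow> Bk' c" unfolding InS'_def Bk'_def using hSB by auto
      have v': "validW Bk' b a T" using v unfolding validW_def Bk'_def by auto
      have top': "\<exists>c. b \<le> c \<and> c < b+T \<and> \<not> Bk' (c,a+T)" using rt unfolding Bk'_def by auto
      have bot': "\<exists>c. b \<le> c \<and> c < b+T \<and> \<not> Bk' (c,a-1)" using lf unfolding Bk'_def by auto
      have wq: "\<exists>i j. b \<le> i \<and> i < b+T \<and> a \<le> j \<and> j < a+T \<and> Uc' (i,j) \<and> \<not> InS' (i,j)"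
        using hq unfolding Uc'_def InS'_def by (intro exI[of _ qy] exI[of _ qx]) auto
      have hp': "InS' (py,px)" using hp unfolding InS'_def by simp
      have ex: "\<exists>a'. validW Bk' a' a T \<and> (\<exists>c. a' \<le> c \<and> c < a'+T \<and> \<not> Bk' (c,a+T)) \<and>
       (\<exists>c. a' \<le> c \<and> c < a'+T \<and> \<not> Bk' (c,a-1)) \<and> a' \<le> py \<and> py < a'+T \<and>
       (\<exists>i j. a' \<le> i \<and> i < a'+T \<and> a \<le> j \<and> j < a+T \<and> Uc' (i,j) \<and> \<not> InS' (i,j)) \<and>
       (\<exists>x'\<in>real_of_int ` Y \<union> YR. \<bar>real_of_int a' - x'\<bar> \<le> 1 \<or> \<bar>real_of_int (a'+T) - x'\<bar> \<le> 1)"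
        by (rule tb_case[where Bk=Bk' and Uc=Uc' and InS=InS' and X=Y and XR=YR and sx=sy and sy=sx and st=st and T=T and px=py and py=px and a=b and b=a])
          (fact h1' h4' h5' hS' hSB' hsy T hp' hp v' top' bot' wq)+
      obtain a' where a'all: "validW Bk' a' a T \<and> (\<exists>c. a' \<le> c \<and> c < a'+T \<and> \<not> Bk' (c,a+T)) \<and>
       (\<exists>c. a' \<le> c \<and> c < a'+T \<and> \<not> Bk' (c,a-1)) \<and> a' \<le> py \<and> py < a'+T \<and>
       (\<exists>i j. a' \<le> i \<and> i < a'+T \<and> a \<le> j \<and> j < a+T \<and> Uc' (i,j) \<and> \<not> InS' (i,j)) \<and>
       (\<exists>x'\<in>real_of_int ` Y \<union> YR. \<bar>real_of_int a' - x'\<bar> \<le> 1 \<or> \<bar>real_of_int (a'+T) - x'\<bar> \<le> 1)" using ex by blast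
      have a': "validW Bk' a' a T" "\<exists>c. a' \<le> c \<and> c < a'+T \<and> \<not> Bk' (c,a+T)"
        "\<exists>c. a' \<le> c \<and> c < a'+T \<and> \<not> Bk' (c,a-1)" "a' \<le> py" "py < a'+T"
        "\<exists>i j. a' \<le> i \<and> i < a'+T \<and> a \<le> j \<and> j < a+T \<and> Uc' (i,j) \<and> \<not> InS' (i,j)"
        "\<exists>x'\<in>real_of_int ` Y \<union> YR. \<bar>real_of_int a' - x'\<bar> \<le> 1 \<or> \<bar>real_of_int (a'+T) - x'\<bar> \<le> 1"
        using a'all by simp_all
      have va: "validW Bk a a' T" using a'(1) unfolding validW_def Bk'_def by auto
      have rt': "\<exists>c. a' \<le> c \<and> c < a'+T \<and> \<not> Bk (a+T,c)" using a'(2) unfolding Bk'_def by auto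
      have lf': "\<exists>c. a' \<le> c \<and> c < a'+T \<and> \<not> Bk (a-1,c)" using a'(3) unfolding Bk'_def by auto
      obtain c where c: "a' \<le> c" "c < a'+T" "\<not> Bk (a-1,c)" using lf' by blast
      have "Bk (a,c)" using va c T unfolding validW_def by auto
      hence aX: "a \<in> X" using h1[of a c] c by auto
      obtain i j where ij: "a' \<le> i" "i < a'+T" "a \<le> j" "j < a+T" "Uc (j,i)" "\<not> InS (j,i)"
        using a'(6) unfolding Uc'_def InS'_def by auto
      obtain y' where y': "y' \<in> real_of_int ` Y \<union> YR" "\<bar>real_of_int a' - y'\<bar> \<le> 1 \<or> \<bar>real_of_int (a'+T) - y'\<bar> \<le> 1"
        using a'(7) by blast
      have im: "imax Bk a a' T" using lr_imax va rt' lf' by blast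
      obtain y where y: "y = a' \<or> y = a'+T" "\<bar>real_of_int y - y'\<bar> \<le> 1" using y'(2) by blast
      have cor: "\<exists>x y. (x = a \<or> x = a+T) \<and> (y = a' \<or> y = a'+T) \<and>
        ((y \<in> Y \<and> (\<exists>x'\<in>real_of_int ` X \<union> XR. \<bar>real_of_int x - x'\<bar> \<le> 1)) \<or>
         (x \<in> X \<and> (\<exists>y'\<in>real_of_int ` Y \<union> YR. \<bar>real_of_int y - y'\<bar> \<le> 1)))"
        using y y'(1) aX by blast
      have "?P a a' T j i" using T im a'(4,5) hp(2,3) ij cor by blast
      thus ?thesis by blast
    qed
  qed
qed

lemma mem_sq: "z \<in> sq (a,b) t \<longleftrightarrow> a \<le> fst z \<and> fst z \<le> a+t \<and> b \<le> snd z \<and> snd z \<le> b+t"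
  by (cases z) (simp add: sq_def cbox_Pair_eq)

lemma sq_eq: "sq (a,b) t = {a..a+t} \<times> {b..b+t}"
  by (simp add: sq_def cbox_Pair_eq)

lemma block_eq: "block (i,j) = sq (real_of_int i, real_of_int j) 1"
  by (simp add: block_def rpt_def)

lemma sq_subset:
  assumes "0 \<le> s"
  shows "sq (a,b) s \<subseteq> sq (c,d) t \<longleftrightarrow> c \<le> a \<and> a+s \<le> c+t \<and> d \<le> b \<and> b+s \<le> d+t"
proof
  assume h: "sq (a,b) s \<subseteq> sq (c,d) t"
  have "(a,b) \<in> sq (a,b) s" "(a+s,b+s) \<in> sq (a,b) s" using assms by (auto simp: mem_sq)
  hence "(a,b) \<in> sq (c,d) t" "(a+s,b+s) \<in> sq (c,d) t" using h by blast+
  thus "c \<le> a \<and> a+s \<le> c+t \<and> d \<le> b \<and> b+s \<le> d+t" unfolding mem_sq by simp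
next
  assume "c \<le> a \<and> a+s \<le> c+t \<and> d \<le> b \<and> b+s \<le> d+t"
  thus "sq (a,b) s \<subseteq> sq (c,d) t" by (auto simp: mem_sq)
qed

lemma block_sub_sq: "block (i,j) \<subseteq> sq (c,d) t \<longleftrightarrow> c \<le> i \<and> i+1 \<le> c+t \<and> d \<le> j \<and> j+1 \<le> d+t"
  unfolding block_eq by (subst sq_subset) auto

lemma meas_sq: "t \<ge> 0 \<Longrightarrow> measure lebesgue (sq (a,b) (t::real)) = t*t"
proof -
  assume t: "t \<ge> 0"
  have "measure lebesgue (sq (a,b) t) = measure lborel (sq (a,b) t)"
    unfolding sq_def by (metis cbox_borel measure_completion sets_lborel)
  also have "\<dots> = t*t" using t unfolding sq_def
    by (simp add: Basis_prod_def measure_lborel_cbox_eq)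
  finally show ?thesis .
qed

lemma poly_path_image:
  "2 \<le> length L \<Longrightarrow> (\<And>k. Suc k < length L \<Longrightarrow> closed_segment (L!k) (L!Suc k) \<subseteq> A)
    \<Longrightarrow> path_image (poly_path L) \<subseteq> A"
proof (induction L rule: poly_path.induct)
  case 1 then show ?case by simp
next
  case (2 v) then show ?case by simp
next
  case (3 v w) then show ?case using "3.prems"(2)[of 0] by simp
next
  case (4 v w u vs)
  have "path_image (poly_path (w # u # vs)) \<subseteq> A"
    using "4.IH" "4.prems"(2)[of "Suc k" for k] by fastforce
  moreover have "closed_segment v w \<subseteq> A" using "4.prems"(2)[of 0] by simp
  ultimately show ?case using path_image_join_subset[of "linepath v w" "poly_path (w # u # vs)"] by auto
qed

lemma seg_snd: assumes "z \<in> closed_segment a b" "snd a = snd (b::pt)" shows "snd z = snd a"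
proof -
  obtain u where "z = (1 - u) *\<^sub>R a + u *\<^sub>R b" using assms(1) unfolding closed_segment_def by blast
  hence "snd z = (1-u) * snd a + u * snd b" by simp
  also have "\<dots> = snd a" using assms(2) by (simp add: algebra_simps)
  finally show ?thesis .
qed
lemma seg_fst: assumes "z \<in> closed_segment a b" "fst a = fst (b::pt)" shows "fst z = fst a"
proof -
  obtain u where "z = (1 - u) *\<^sub>R a + u *\<^sub>R b" using assms(1) unfolding closed_segment_def by blast
  hence "fst z = (1-u) * fst a + u * fst b" by simp
  also have "\<dots> = fst a" using assms(2) by (simp add: algebra_simps)
  finally show ?thesis .
qed

lemma ortho_C:
  assumes "ortho_polygon vs" "z \<in> path_image (closed_poly_path vs)"
  shows "fst z \<in> real_of_int ` fst ` set vs \<or> snd z \<in> real_of_int ` snd ` set vs"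
proof -
  define A where "A = {z::pt. fst z \<in> real_of_int ` fst ` set vs \<or> snd z \<in> real_of_int ` snd ` set vs}"
  define L where "L = map rpt (vs @ [hd vs])"
  have len: "length vs \<ge> 4" using assms(1) unfolding ortho_polygon_def by simp
  have edge: "horiz_edge vs k \<or> vert_edge vs k" if "k < length vs" for k
    using assms(1) that unfolding ortho_polygon_def by blast
  have "path_image (poly_path L) \<subseteq> A"
  proof (rule poly_path_image)
    show "2 \<le> length L" using len unfolding L_def by simp
    fix k assume k: "Suc k < length L"
    hence kl: "k < length vs" unfolding L_def by simp
    have Lk: "L!k = rpt (vs!k)" using kl unfolding L_def by (simp add: nth_append)
    have Lk1: "L!Suc k = rpt (nxt vs k)"
    proof (cases "Suc k < length vs")
      case True thus ?thesis unfolding L_def nxt_def by (simp add: nth_append)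
    next
      case False
      hence "Suc k = length vs" using kl by simp
      have "vs \<noteq> []" using len by auto
      thus ?thesis unfolding L_def nxt_def using \<open>Suc k = length vs\<close> by (simp add: nth_append hd_conv_nth)
    qed
    have vk: "vs!k \<in> set vs" using kl by simp
    show "closed_segment (L!k) (L!Suc k) \<subseteq> A"
    proof
      fix z assume z: "z \<in> closed_segment (L!k) (L!Suc k)"
      from edge[OF kl] show "z \<in> A"
      proof
        assume "horiz_edge vs k"
        hence "snd (L!k) = snd (L!Suc k)" unfolding Lk Lk1 horiz_edge_def rpt_def by simp
        hence "snd z = snd (L!k)" using seg_snd z by blast
        thus "z \<in> A" unfolding A_def Lk rpt_def using vk by auto
      next
        assume "vert_edge vs k"
        hence "fst (L!k) = fst (L!Suc k)" unfolding Lk Lk1 vert_edge_def rpt_def by simp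
        hence "fst z = fst (L!k)" using seg_fst z by blast
        thus "z \<in> A" unfolding A_def Lk rpt_def using vk by auto
      qed
    qed
  qed
  thus ?thesis using assms(2) unfolding closed_poly_path_def L_def A_def by blast
qed

lemma ortho_path: "ortho_polygon vs \<Longrightarrow> path (closed_poly_path vs)"
  unfolding ortho_polygon_def by (simp add: simple_path_imp_path)

lemma region_closed: "ortho_polygon vs \<Longrightarrow> closed (region vs)"
  unfolding region_def using closed_path_image_Un_inside ortho_path by blast

lemma region_bounded: "ortho_polygon vs \<Longrightarrow> bounded (region vs)"
  unfolding region_def
  by (meson bounded_Un bounded_inside compact_imp_bounded compact_path_image ortho_path)

lemma conn_region:
  assumes "connected U" "U \<inter> path_image (closed_poly_path vs) = {}" "z \<in> U" "z \<in> region vs"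
  shows "U \<subseteq> region vs"
proof -
  let ?C = "path_image (closed_poly_path vs)"
  have "z \<in> inside ?C" using assms unfolding region_def by blast
  hence "outside ?C \<inter> U = {}" using inside_outside_intersect_connected[OF assms(1)] assms(2,3) by blast
  thus ?thesis unfolding region_def using union_with_inside by blast
qed

lemma box_region:
  fixes a b c d :: real
  assumes ov: "ortho_polygon vs" and ab: "a < b" "c < d"
    and dis: "\<And>z. z \<in> {a<..<b} \<times> {c<..<d} \<Longrightarrow> z \<notin> path_image (closed_poly_path vs)"
    and z: "z \<in> {a<..<b} \<times> {c<..<d}" "z \<in> region vs"
  shows "{a..b} \<times> {c..d} \<subseteq> region vs"
proof -
  let ?U = "{a<..<b} \<times> {c<..<d}"
  have "connected ?U" by (intro convex_connected convex_Times convex_real_interval)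
  hence "?U \<subseteq> region vs" using conn_region[OF _ _ z] dis by blast
  hence "closure ?U \<subseteq> region vs" using region_closed[OF ov] closure_minimal by blast
  thus ?thesis using ab by (simp add: closure_Times)
qed

lemma not_int_between: "real_of_int k < x \<Longrightarrow> x < real_of_int k + 1 \<Longrightarrow> x \<notin> real_of_int ` A"
proof
  assume "real_of_int k < x" "x < real_of_int k + 1" "x \<in> real_of_int ` A"
  then obtain m where "x = real_of_int m" by blast
  with \<open>real_of_int k < x\<close> \<open>x < real_of_int k + 1\<close>
  have "real_of_int k < real_of_int m" "real_of_int m < real_of_int (k+1)" by auto
  hence "k < m" "m < k+1" by (simp only: of_int_less_iff)+
  thus False by simp
qed

lemma block_shift_x:
  assumes ov: "ortho_polygon vs" and i: "i \<notin> fst ` set vs"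
  shows "is_block vs (i-1,j) = is_block vs (i,j)"
proof -
  let ?C = "path_image (closed_poly_path vs)"
  have dis: "z \<notin> ?C" if "z \<in> {real_of_int i - 1<..<real_of_int i + 1} \<times> {real_of_int j<..<real_of_int j + 1}" for z
  proof
    assume "z \<in> ?C"
    from ortho_C[OF ov this] show False
    proof
      assume "fst z \<in> real_of_int ` fst ` set vs"
      then obtain x where x: "x \<in> fst ` set vs" "fst z = real_of_int x" by blast
      hence "x = i" using that by auto
      thus False using x i by simp
    next
      assume "snd z \<in> real_of_int ` snd ` set vs"
      thus False using that not_int_between[of j "snd z"] by auto
    qed
  qed
  have big: "{real_of_int i - 1..real_of_int i + 1} \<times> {real_of_int j..real_of_int j + 1} \<subseteq> region vs"
    if "z \<in> {real_of_int i - 1<..<real_of_int i + 1} \<times> {real_of_int j<..<real_of_int j + 1}" "z \<in> region vs" for z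
    using box_region[OF ov _ _ dis that] by simp
  have b1: "block (i-1,j) = {real_of_int i - 1..real_of_int i} \<times> {real_of_int j..real_of_int j + 1}"
    by (simp add: block_eq sq_eq)
  have b2: "block (i,j) = {real_of_int i..real_of_int i + 1} \<times> {real_of_int j..real_of_int j + 1}"
    by (simp add: block_eq sq_eq)
  show ?thesis
  proof
    assume "is_block vs (i-1,j)"
    hence "(real_of_int i - 1/2, real_of_int j + 1/2) \<in> region vs" unfolding is_block_def b1 by auto
    from big[OF _ this] have "{real_of_int i - 1..real_of_int i + 1} \<times> {real_of_int j..real_of_int j + 1} \<subseteq> region vs" by auto
    thus "is_block vs (i,j)" unfolding is_block_def b2 by auto
  next
    assume "is_block vs (i,j)"
    hence "(real_of_int i + 1/2, real_of_int j + 1/2) \<in> region vs" unfolding is_block_def b2 by auto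
    from big[OF _ this] have "{real_of_int i - 1..real_of_int i + 1} \<times> {real_of_int j..real_of_int j + 1} \<subseteq> region vs" by auto
    thus "is_block vs (i-1,j)" unfolding is_block_def b1 by auto
  qed
qed

lemma block_shift_y:
  assumes ov: "ortho_polygon vs" and j: "j \<notin> snd ` set vs"
  shows "is_block vs (i,j-1) = is_block vs (i,j)"
proof -
  let ?C = "path_image (closed_poly_path vs)"
  have dis: "z \<notin> ?C" if "z \<in> {real_of_int i<..<real_of_int i + 1} \<times> {real_of_int j - 1<..<real_of_int j + 1}" for z
  proof
    assume "z \<in> ?C"
    from ortho_C[OF ov this] show False
    proof
      assume "snd z \<in> real_of_int ` snd ` set vs"
      then obtain y where y: "y \<in> snd ` set vs" "snd z = real_of_int y" by blast
      hence "y = j" using that by auto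
      thus False using y j by simp
    next
      assume "fst z \<in> real_of_int ` fst ` set vs"
      thus False using that not_int_between[of i "fst z"] by auto
    qed
  qed
  have big: "{real_of_int i..real_of_int i + 1} \<times> {real_of_int j - 1..real_of_int j + 1} \<subseteq> region vs"
    if "z \<in> {real_of_int i<..<real_of_int i + 1} \<times> {real_of_int j - 1<..<real_of_int j + 1}" "z \<in> region vs" for z
    using box_region[OF ov _ _ dis that] by simp
  have b1: "block (i,j-1) = {real_of_int i..real_of_int i + 1} \<times> {real_of_int j - 1..real_of_int j}"
    by (simp add: block_eq sq_eq)
  have b2: "block (i,j) = {real_of_int i..real_of_int i + 1} \<times> {real_of_int j..real_of_int j + 1}"
    by (simp add: block_eq sq_eq)
  show ?thesis
  proof
    assume "is_block vs (i,j-1)"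
    hence "(real_of_int i + 1/2, real_of_int j - 1/2) \<in> region vs" unfolding is_block_def b1 by auto
    from big[OF _ this] have "{real_of_int i..real_of_int i + 1} \<times> {real_of_int j - 1..real_of_int j + 1} \<subseteq> region vs" by auto
    thus "is_block vs (i,j)" unfolding is_block_def b2 by auto
  next
    assume "is_block vs (i,j)"
    hence "(real_of_int i + 1/2, real_of_int j + 1/2) \<in> region vs" unfolding is_block_def b2 by auto
    from big[OF _ this] have "{real_of_int i..real_of_int i + 1} \<times> {real_of_int j - 1..real_of_int j + 1} \<subseteq> region vs" by auto
    thus "is_block vs (i,j-1)" unfolding is_block_def b1 by auto
  qed
qed

lemma cell_in_valid:
  assumes ov: "ortho_polygon vs" and Q: "sq (c1,c2) t \<subseteq> region vs" and t: "t > 0"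
    and h: "c1 < real_of_int i + 1" "real_of_int i < c1 + t" "c2 < real_of_int j + 1" "real_of_int j < c2 + t"
  shows "is_block vs (i,j)"
proof -
  let ?C = "path_image (closed_poly_path vs)"
  have dis: "z \<notin> ?C" if "z \<in> {real_of_int i<..<real_of_int i + 1} \<times> {real_of_int j<..<real_of_int j + 1}" for z
  proof
    assume "z \<in> ?C"
    from ortho_C[OF ov this] show False
      using that not_int_between[of i "fst z"] not_int_between[of j "snd z"] by auto
  qed
  define x0 where "x0 = (max (real_of_int i) c1 + min (real_of_int i + 1) (c1+t)) / 2"
  define y0 where "y0 = (max (real_of_int j) c2 + min (real_of_int j + 1) (c2+t)) / 2"
  have zin: "(x0,y0) \<in> {real_of_int i<..<real_of_int i + 1} \<times> {real_of_int j<..<real_of_int j + 1}"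
    using h t unfolding x0_def y0_def by (auto simp: max_def min_def)
  have "(x0,y0) \<in> sq (c1,c2) t" using h t unfolding x0_def y0_def mem_sq by (auto simp: max_def min_def)
  hence "(x0,y0) \<in> region vs" using Q by blast
  from box_region[OF ov _ _ dis zin this] show ?thesis
    unfolding is_block_def by (simp add: block_eq sq_eq)
qed

lemma rpt_sq: "sq (rpt (a,b)) t = sq (real_of_int a, real_of_int b) t"
  by (simp add: rpt_def)

lemma cell_sub_W:
  assumes "a \<le> i" "i < a+T" "b \<le> j" "j < b+T"
  shows "block (i,j) \<subseteq> sq (rpt (a,b)) (real_of_int T)"
  unfolding rpt_sq block_sub_sq using assms by simp

lemma W_sub_region:
  assumes v: "validW (is_block vs) a b T" and T: "T \<ge> 1"
  shows "sq (rpt (a,b)) (real_of_int T) \<subseteq> region vs"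
proof
  fix z assume z: "z \<in> sq (rpt (a,b)) (real_of_int T)"
  hence zz: "a \<le> fst z" "fst z \<le> a+T" "b \<le> snd z" "snd z \<le> b+T" unfolding rpt_sq mem_sq by auto
  define i where "i = min (floor (fst z)) (a+T-1)"
  define j where "j = min (floor (snd z)) (b+T-1)"
  have i: "a \<le> i" "i < a+T" "i \<le> fst z" "fst z \<le> i+1" using zz T unfolding i_def by (auto simp: min_def; linarith)+
  have j: "b \<le> j" "j < b+T" "j \<le> snd z" "snd z \<le> j+1" using zz T unfolding j_def by (auto simp: min_def; linarith)+
  have "is_block vs (i,j)" using v i j unfolding validW_def by blast
  moreover have "z \<in> block (i,j)" unfolding block_eq mem_sq using i j by auto
  ultimately show "z \<in> region vs" unfolding is_block_def by blast
qed

lemma imax_maximal: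
  assumes ov: "ortho_polygon vs" and im: "imax (is_block vs) a b T" and T: "T \<ge> 1"
  shows "maximal_square vs (sq (rpt (a,b)) (real_of_int T))"
proof -
  have v: "validW (is_block vs) a b T" using im unfolding imax_def by blast
  have vs: "valid_square vs (sq (rpt (a,b)) (real_of_int T))"
    unfolding valid_square_def
  proof (intro conjI)
    show "\<exists>c t. t > 0 \<and> sq (rpt (a,b)) (real_of_int T) = sq c t"
      using T by (intro exI[of _ "rpt (a,b)"] exI[of _ "real_of_int T"]) simp
  qed (rule W_sub_region[OF v T])
  have "False" if Q': "valid_square vs Q'" "sq (rpt (a,b)) (real_of_int T) \<subseteq> Q'"
     "measure lebesgue Q' > measure lebesgue (sq (rpt (a,b)) (real_of_int T))" for Q'
  proof -
    obtain c t where ct: "t > 0" "Q' = sq c t" "Q' \<subseteq> region vs" using Q'(1) unfolding valid_square_def by blast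
    obtain c1 c2 where c: "c = (c1,c2)" by (cases c)
    have T0: "0 \<le> real_of_int T" using T by simp
    have "sq (real_of_int a, real_of_int b) (real_of_int T) \<subseteq> sq (c1,c2) t"
      using Q'(2) unfolding ct(2) c rpt_sq .
    hence sub: "c1 \<le> a" "a+T \<le> c1+t" "c2 \<le> b" "b+T \<le> c2+t"
      unfolding sq_subset[OF T0] by simp_all
    have m1: "measure lebesgue Q' = t*t" unfolding ct(2) c using ct(1) by (simp add: meas_sq)
    have m2: "measure lebesgue (sq (rpt (a,b)) (real_of_int T)) = real_of_int T * real_of_int T"
      unfolding rpt_sq using T0 by (rule meas_sq)
    have "t*t > real_of_int T * real_of_int T"
      using Q'(3) unfolding m1 m2 .
    hence tT: "t > real_of_int T"
    proof -
      assume tt: "t*t > real_of_int T * real_of_int T"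
      show ?thesis
      proof (rule ccontr)
        assume "\<not> t > real_of_int T"
        hence "t \<le> real_of_int T" by simp
        hence "t*t \<le> real_of_int T * real_of_int T" using ct(1) by (intro mult_mono) auto
        thus False using tt by simp
      qed
    qed
    define a' where "a' = (if c1 < a then a-1 else a)"
    define b' where "b' = (if c2 < b then b-1 else b)"
    have "validW (is_block vs) a' b' (T+1)" unfolding validW_def
    proof (intro allI impI)
      fix i j assume r: "a' \<le> i" "i < a'+(T+1)" "b' \<le> j" "j < b'+(T+1)"
      have xi: "c1 < real_of_int i + 1" "real_of_int i < c1 + t"
      proof -
        have "real_of_int a' \<le> i" "real_of_int i \<le> a'+T" using r by linarith+
        thus "c1 < real_of_int i + 1" "real_of_int i < c1 + t" using sub tT unfolding a'_def
          by (auto split: if_splits)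
      qed
      have yj: "c2 < real_of_int j + 1" "real_of_int j < c2 + t"
      proof -
        have "real_of_int b' \<le> j" "real_of_int j \<le> b'+T" using r by linarith+
        thus "c2 < real_of_int j + 1" "real_of_int j < c2 + t" using sub tT unfolding b'_def
          by (auto split: if_splits)
      qed
      show "is_block vs (i,j)"
        using cell_in_valid[OF ov _ ct(1) xi yj] ct(2,3) c by simp
    qed
    moreover have "a' = a-1 \<or> a' = a" "b' = b-1 \<or> b' = b" unfolding a'_def b'_def by auto
    ultimately show False using im unfolding imax_def by blast
  qed
  thus ?thesis unfolding maximal_square_def using vs by blast
qed

lemma init_1d:
  fixes c t :: real and u v m :: int
  assumes "c \<le> u" "u+1 \<le> c+t" "c \<le> v" "v+1 \<le> c+t" "\<bar>u - v\<bar> + 1 \<le> m" "real_of_int m \<le> t"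
  shows "\<exists>a. a \<le> u \<and> u < a+m \<and> a \<le> v \<and> v < a+m \<and> (\<forall>i. a \<le> i \<longrightarrow> i < a+m \<longrightarrow> c < real_of_int i + 1 \<and> real_of_int i < c+t)"
proof -
  define a where "a = max (floor c) (max u v + 1 - m)"
  have "floor c \<le> u" "floor c \<le> v" using assms by linarith+
  hence a1: "a \<le> u" "a \<le> v" "u < a+m" "v < a+m" using assms(5) unfolding a_def by auto
  have a2: "c < real_of_int i + 1 \<and> real_of_int i < c+t" if "a \<le> i" "i < a+m" for i
  proof
    have "floor c \<le> i" using that unfolding a_def by auto
    thus "c < real_of_int i + 1" by linarith
    show "real_of_int i < c+t"
    proof (cases "floor c \<ge> max u v + 1 - m")
      case True
      hence "i \<le> floor c + m - 1" using that unfolding a_def by auto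
      hence "real_of_int i \<le> real_of_int (floor c) + m - 1" by linarith
      thus ?thesis using assms(6) by linarith
    next
      case False
      hence "i \<le> max u v" using that unfolding a_def by auto
      thus ?thesis using assms(2,4) by (auto simp: max_def split: if_splits; linarith)
    qed
  qed
  show ?thesis using a1 a2 by blast
qed

lemma init_square:
  assumes ov: "ortho_polygon vs" and Q: "valid_square vs Q" "block (px,py) \<subseteq> Q" "block (qx,qy) \<subseteq> Q"
  shows "\<exists>a b T. T \<ge> 1 \<and> validW (is_block vs) a b T \<and> a \<le> px \<and> px < a+T \<and> b \<le> py \<and> py < b+T \<and>
           a \<le> qx \<and> qx < a+T \<and> b \<le> qy \<and> qy < b+T"
proof -
  obtain c t where ct: "t > 0" "Q = sq c t" "Q \<subseteq> region vs" using Q(1) unfolding valid_square_def by blast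
  obtain c1 c2 where c: "c = (c1,c2)" by (cases c)
  have h: "c1 \<le> px" "px+1 \<le> c1+t" "c2 \<le> py" "py+1 \<le> c2+t"
          "c1 \<le> qx" "qx+1 \<le> c1+t" "c2 \<le> qy" "qy+1 \<le> c2+t"
    using Q(2,3) unfolding ct(2) c block_sub_sq by auto
  define m where "m = max \<bar>px - qx\<bar> \<bar>py - qy\<bar> + 1"
  have m1: "m \<ge> 1" unfolding m_def by auto
  have mt: "real_of_int m \<le> t"
  proof -
    have "real_of_int \<bar>px - qx\<bar> + 1 \<le> t" "real_of_int \<bar>py - qy\<bar> + 1 \<le> t" using h by linarith+
    thus ?thesis unfolding m_def by (simp add: max_def)
  qed
  obtain a where a: "a \<le> px" "px < a+m" "a \<le> qx" "qx < a+m" "\<forall>i. a \<le> i \<longrightarrow> i < a+m \<longrightarrow> c1 < real_of_int i + 1 \<and> real_of_int i < c1+t"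
    using init_1d[of c1 px t qx m] h mt unfolding m_def by auto
  obtain b where b: "b \<le> py" "py < b+m" "b \<le> qy" "qy < b+m" "\<forall>i. b \<le> i \<longrightarrow> i < b+m \<longrightarrow> c2 < real_of_int i + 1 \<and> real_of_int i < c2+t"
    using init_1d[of c2 py t qy m] h mt unfolding m_def by auto
  have vw: "validW (is_block vs) a b m" unfolding validW_def
  proof (intro allI impI)
    fix i j assume "a \<le> i" "i < a+m" "b \<le> j" "j < b+m"
    hence "c1 < real_of_int i + 1" "real_of_int i < c1+t" "c2 < real_of_int j + 1" "real_of_int j < c2+t" using a(5) b(5) by auto
    thus "is_block vs (i,j)" using cell_in_valid[OF ov _ ct(1)] ct(2,3) c by auto
  qed
  show ?thesis using a(1-4) b(1-4) m1 vw by (intro exI[of _ a] exI[of _ b] exI[of _ m]) simp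
qed

lemma exists_imax:
  assumes ov: "ortho_polygon vs" and T0: "T0 \<ge> 1" and v0: "validW (is_block vs) a0 b0 T0"
    and c0: "a0 \<le> px" "px < a0+T0" "b0 \<le> py" "py < b0+T0" "a0 \<le> qx" "qx < a0+T0" "b0 \<le> qy" "qy < b0+T0"
  shows "\<exists>a b T. T \<ge> 1 \<and> imax (is_block vs) a b T \<and> a \<le> px \<and> px < a+T \<and> b \<le> py \<and> py < b+T \<and>
           a \<le> qx \<and> qx < a+T \<and> b \<le> qy \<and> qy < b+T"
proof -
  obtain B where B: "\<forall>z\<in>region vs. norm z \<le> B" using region_bounded[OF ov] bounded_iff by blast
  have bnd: "real_of_int T \<le> 2*B+1" if "validW (is_block vs) a b T" "T \<ge> 1" for a b T
  proof -
    have "is_block vs (a,b)" "is_block vs (a+T-1,b)" using that unfolding validW_def by auto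
    hence "rpt (a,b) \<in> region vs" "rpt (a+T-1,b) \<in> region vs" unfolding is_block_def block_def
      by (auto simp: mem_sq rpt_def)
    hence "norm (rpt (a,b)) \<le> B" "norm (rpt (a+T-1,b)) \<le> B" using B by auto
    moreover have "norm (fst (rpt (a,b))) \<le> norm (rpt (a,b))" "norm (fst (rpt (a+T-1,b))) \<le> norm (rpt (a+T-1,b))"
      unfolding rpt_def fst_conv by (rule norm_fst_le)+
    ultimately have "\<bar>real_of_int a\<bar> \<le> B" "\<bar>real_of_int (a+T-1)\<bar> \<le> B" unfolding rpt_def by simp_all
    thus ?thesis by simp
  qed
  define K where "K = ceiling (2*B+1)"
  define P where "P T \<longleftrightarrow> (\<exists>a b. validW (is_block vs) a b T \<and> a \<le> px \<and> px < a+T \<and> b \<le> py \<and> py < b+T \<and>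
           a \<le> qx \<and> qx < a+T \<and> b \<le> qy \<and> qy < b+T)" for T
  define Ts where "Ts = {T \<in> {1..K}. P T}"
  have PK: "T \<le> K" if pt: "P T" "T \<ge> 1" for T
  proof -
    obtain a b where "validW (is_block vs) a b T" using pt unfolding P_def by blast
    hence "real_of_int T \<le> 2*B+1" using bnd pt by blast
    hence "real_of_int T \<le> real_of_int K" unfolding K_def using le_of_int_ceiling[of "2*B+1"] by linarith
    thus ?thesis by (simp only: of_int_le_iff)
  qed
  have fin: "finite Ts" unfolding Ts_def by (rule finite_subset[of _ "{1..K}"]) auto
  have P0: "P T0" unfolding P_def using v0 c0 by (intro exI[of _ a0] exI[of _ b0]) simp
  have T0in: "T0 \<in> Ts" unfolding Ts_def using T0 P0 PK[of T0] by simp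
  define Tm where "Tm = Max Ts"
  have Tmin: "Tm \<in> Ts" unfolding Tm_def using fin T0in Max_in by blast
  hence Tm1: "Tm \<ge> 1" "P Tm" unfolding Ts_def by auto
  obtain a b where ab: "validW (is_block vs) a b Tm" "a \<le> px" "px < a+Tm" "b \<le> py" "py < b+Tm"
           "a \<le> qx" "qx < a+Tm" "b \<le> qy" "qy < b+Tm" using Tm1(2) unfolding P_def by blast
  have imx: "imax (is_block vs) a b Tm" unfolding imax_def
  proof (intro conjI allI impI)
    show "validW (is_block vs) a b Tm" by fact
    fix a' b' assume a': "a' = a-1 \<or> a' = a" and b': "b' = b-1 \<or> b' = b"
    show "\<not> validW (is_block vs) a' b' (Tm+1)"
    proof
      assume "validW (is_block vs) a' b' (Tm+1)"
      hence "P (Tm+1)" unfolding P_def using ab a' b' by (intro exI[of _ a'] exI[of _ b']) auto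
      hence "Tm+1 \<in> Ts" unfolding Ts_def using PK Tm1 by auto
      hence "Tm+1 \<le> Tm" unfolding Tm_def by (rule Max_ge[OF fin])
      thus False by simp
    qed
  qed
  show ?thesis using ab(2-9) Tm1(1) imx by (intro exI[of _ a] exI[of _ b] exI[of _ Tm]) simp
qed

lemma corner_in:
  assumes "R = cbox (a,b) (c,d)" "a \<le> c" "b \<le> d" "x = a \<or> x = c" "y = b \<or> y = d"
  shows "(x,y) \<in> rect_corners R"
  unfolding rect_corners_def using assms by blast

lemma mem_cbox2:
  fixes a b c d :: real
  shows "z \<in> cbox (a,b) (c,d) \<longleftrightarrow> a \<le> fst z \<and> fst z \<le> c \<and> b \<le> snd z \<and> snd z \<le> d"
  by (cases z) (simp add: cbox_Pair_eq)

lemma rr_rect: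
  assumes "partial_solution vs RR" "R \<in> RR"
  shows "\<exists>a b c d. R = cbox (a,b) (c,d) \<and> a \<le> c \<and> b \<le> d"
proof -
  obtain M where M: "min_covering vs M" "RR \<subseteq> M" using assms(1) unfolding partial_solution_def by blast
  hence "rec_pack vs R" using assms(2) unfolding min_covering_def by blast
  then obtain a b t and \<eta> :: nat where h: "t > 0" "\<eta> \<ge> 1"
    "R = cbox (a, b) (a + real \<eta> * t, b + t) \<or> R = cbox (a, b) (a + t, b + real \<eta> * t)"
    unfolding rec_pack_def by blast
  have e: "real \<eta> * t \<ge> 0" using h by simp
  from h(3) show ?thesis
  proof
    assume "R = cbox (a, b) (a + real \<eta> * t, b + t)"
    thus ?thesis using e h(1) by (intro exI[of _ a] exI[of _ b] exI[of _ "a + real \<eta> * t"] exI[of _ "b+t"]) simp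
  next
    assume "R = cbox (a, b) (a + t, b + real \<eta> * t)"
    thus ?thesis using e h(1) by (intro exI[of _ a] exI[of _ b] exI[of _ "a + t"] exI[of _ "b + real \<eta> * t"]) simp
  qed
qed

lemma cover_left:
  assumes ps: "partial_solution vs RR" and U: "uncovered vs RR (i,j)" and B: "is_block vs (i-1,j)"
    and nU: "\<not> uncovered vs RR (i-1,j)"
  shows "\<exists>R\<in>RR. \<exists>c \<in> fst ` rect_corners R. real_of_int i \<le> c \<and> c < real_of_int i + 1"
proof -
  have cov: "block (i-1,j) \<subseteq> \<Union>RR" using B nU unfolding uncovered_def by blast
  obtain q where q: "q \<in> block (i,j)" "q \<notin> \<Union>RR" using U unfolding uncovered_def by blast
  have qq: "real_of_int i \<le> fst q" "fst q \<le> real_of_int i + 1" "real_of_int j \<le> snd q" "snd q \<le> real_of_int j + 1"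
    using q(1) unfolding block_eq mem_sq by auto
  have "(real_of_int i, snd q) \<in> block (i-1,j)" using qq unfolding block_eq mem_sq by auto
  then obtain R where R: "R \<in> RR" "(real_of_int i, snd q) \<in> R" using cov by blast
  obtain a b c d where r: "R = cbox (a,b) (c,d)" "a \<le> c" "b \<le> d" using rr_rect[OF ps R(1)] by blast
  have h: "a \<le> real_of_int i" "real_of_int i \<le> c" "b \<le> snd q" "snd q \<le> d" using R(2) unfolding r mem_cbox2 by auto
  have "q \<notin> R" using q R by blast
  hence "c < fst q" using h qq unfolding r mem_cbox2 by auto
  moreover have "c \<in> fst ` rect_corners R" using corner_in[OF r, of c b] by force
  ultimately show ?thesis using R h qq by force
qed

lemma cover_right:
  assumes ps: "partial_solution vs RR" and U: "uncovered vs RR (i,j)" and B: "is_block vs (i+1,j)"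
    and nU: "\<not> uncovered vs RR (i+1,j)"
  shows "\<exists>R\<in>RR. \<exists>c \<in> fst ` rect_corners R. real_of_int i < c \<and> c \<le> real_of_int i + 1"
proof -
  have cov: "block (i+1,j) \<subseteq> \<Union>RR" using B nU unfolding uncovered_def by blast
  obtain q where q: "q \<in> block (i,j)" "q \<notin> \<Union>RR" using U unfolding uncovered_def by blast
  have qq: "real_of_int i \<le> fst q" "fst q \<le> real_of_int i + 1" "real_of_int j \<le> snd q" "snd q \<le> real_of_int j + 1"
    using q(1) unfolding block_eq mem_sq by auto
  have "(real_of_int i + 1, snd q) \<in> block (i+1,j)" using qq unfolding block_eq mem_sq by auto
  then obtain R where R: "R \<in> RR" "(real_of_int i + 1, snd q) \<in> R" using cov by blast
  obtain a b c d where r: "R = cbox (a,b) (c,d)" "a \<le> c" "b \<le> d" using rr_rect[OF ps R(1)] by blast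
  have h: "a \<le> real_of_int i + 1" "real_of_int i + 1 \<le> c" "b \<le> snd q" "snd q \<le> d" using R(2) unfolding r mem_cbox2 by auto
  have "q \<notin> R" using q R by blast
  hence "fst q < a" using h qq unfolding r mem_cbox2 by auto
  moreover have "a \<in> fst ` rect_corners R" using corner_in[OF r, of a b] by force
  ultimately show ?thesis using R h qq by force
qed

lemma cover_down:
  assumes ps: "partial_solution vs RR" and U: "uncovered vs RR (i,j)" and B: "is_block vs (i,j-1)"
    and nU: "\<not> uncovered vs RR (i,j-1)"
  shows "\<exists>R\<in>RR. \<exists>c \<in> snd ` rect_corners R. real_of_int j \<le> c \<and> c < real_of_int j + 1"
proof -
  have cov: "block (i,j-1) \<subseteq> \<Union>RR" using B nU unfolding uncovered_def by blast
  obtain q where q: "q \<in> block (i,j)" "q \<notin> \<Union>RR" using U unfolding uncovered_def by blast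
  have qq: "real_of_int i \<le> fst q" "fst q \<le> real_of_int i + 1" "real_of_int j \<le> snd q" "snd q \<le> real_of_int j + 1"
    using q(1) unfolding block_eq mem_sq by auto
  have "(fst q, real_of_int j) \<in> block (i,j-1)" using qq unfolding block_eq mem_sq by auto
  then obtain R where R: "R \<in> RR" "(fst q, real_of_int j) \<in> R" using cov by blast
  obtain a b c d where r: "R = cbox (a,b) (c,d)" "a \<le> c" "b \<le> d" using rr_rect[OF ps R(1)] by blast
  have h: "a \<le> fst q" "fst q \<le> c" "b \<le> real_of_int j" "real_of_int j \<le> d" using R(2) unfolding r mem_cbox2 by auto
  have "q \<notin> R" using q R by blast
  hence "d < snd q" using h qq unfolding r mem_cbox2 by auto
  moreover have "d \<in> snd ` rect_corners R" using corner_in[OF r, of a d] by force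
  ultimately show ?thesis using R h qq by force
qed

lemma cover_up:
  assumes ps: "partial_solution vs RR" and U: "uncovered vs RR (i,j)" and B: "is_block vs (i,j+1)"
    and nU: "\<not> uncovered vs RR (i,j+1)"
  shows "\<exists>R\<in>RR. \<exists>c \<in> snd ` rect_corners R. real_of_int j < c \<and> c \<le> real_of_int j + 1"
proof -
  have cov: "block (i,j+1) \<subseteq> \<Union>RR" using B nU unfolding uncovered_def by blast
  obtain q where q: "q \<in> block (i,j)" "q \<notin> \<Union>RR" using U unfolding uncovered_def by blast
  have qq: "real_of_int i \<le> fst q" "fst q \<le> real_of_int i + 1" "real_of_int j \<le> snd q" "snd q \<le> real_of_int j + 1"
    using q(1) unfolding block_eq mem_sq by auto
  have "(fst q, real_of_int j + 1) \<in> block (i,j+1)" using qq unfolding block_eq mem_sq by auto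
  then obtain R where R: "R \<in> RR" "(fst q, real_of_int j + 1) \<in> R" using cov by blast
  obtain a b c d where r: "R = cbox (a,b) (c,d)" "a \<le> c" "b \<le> d" using rr_rect[OF ps R(1)] by blast
  have h: "a \<le> fst q" "fst q \<le> c" "b \<le> real_of_int j + 1" "real_of_int j + 1 \<le> d" using R(2) unfolding r mem_cbox2 by auto
  have "q \<notin> R" using q R by blast
  hence "snd q < b" using h qq unfolding r mem_cbox2 by auto
  moreover have "b \<in> snd ` rect_corners R" using corner_in[OF r, of a b] by force
  ultimately show ?thesis using R h qq by force
qed


theorem lemma4p11:
  fixes vs :: "(int \<times> int) list" and RR :: "(real \<times> real) set set"
    and S :: "(real \<times> real) set" and p p1 :: "int \<times> int"
  assumes "ortho_polygon vs"
    and "partial_solution vs RR"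
    and "\<Union>RR \<noteq> region vs"
    and "valid_square vs S"
    and "adjGR vs RR p p1"
    and "block p \<subseteq> S"
    and "\<not> block p1 \<subseteq> S"
  shows "\<exists>p'. adjGR vs RR p p' \<and> \<not> block p' \<subseteq> S \<and>
           (\<exists>Sstar. maximal_square vs Sstar \<and> block p \<subseteq> Sstar \<and> block p' \<subseteq> Sstar \<and>
              (\<exists>c \<in> D_x vs (insert S RR) \<union> D_y vs (insert S RR). rpt c \<in> rect_corners Sstar))"
proof -
  note ov = assms(1) and ps = assms(2)
  obtain px py where p: "p = (px,py)" by (cases p)
  obtain qx qy where p1: "p1 = (qx,qy)" by (cases p1)
  obtain c st where S: "st > 0" "S = sq c st" "S \<subseteq> region vs" using assms(4) unfolding valid_square_def by blast
  obtain sx sy where c: "c = (sx,sy)" by (cases c)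
  have Scb: "S = cbox (sx,sy) (sx+st,sy+st)" unfolding S(2) c sq_def by simp
  define Bk where "Bk = is_block vs"
  define Uc where "Uc = uncovered vs RR"
  define InS where "InS = (\<lambda>c. block c \<subseteq> S)"
  define X where "X = fst ` set vs"
  define Y where "Y = snd ` set vs"
  define XR where "XR = (\<Union>R\<in>insert S RR. fst ` rect_corners R)"
  define YR where "YR = (\<Union>R\<in>insert S RR. snd ` rect_corners R)"
  have h1: "\<And>i j. i \<notin> X \<Longrightarrow> Bk (i-1,j) = Bk (i,j)" unfolding Bk_def X_def using block_shift_x[OF ov] by blast
  have h2: "\<And>i j. j \<notin> Y \<Longrightarrow> Bk (i,j-1) = Bk (i,j)" unfolding Bk_def Y_def using block_shift_y[OF ov] by blast
  have h4: "\<exists>c\<in>XR. i \<le> c \<and> c < i+1" if "Uc (i,j)" "Bk (i-1,j)" "\<not> Uc (i-1,j)" for i j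
    using cover_left[OF ps, of i j] that unfolding Uc_def Bk_def XR_def by force
  have h5: "\<exists>c\<in>XR. i < c \<and> c \<le> i+1" if "Uc (i,j)" "Bk (i+1,j)" "\<not> Uc (i+1,j)" for i j
    using cover_right[OF ps, of i j] that unfolding Uc_def Bk_def XR_def by force
  have h6: "\<exists>c\<in>YR. j \<le> c \<and> c < j+1" if "Uc (i,j)" "Bk (i,j-1)" "\<not> Uc (i,j-1)" for i j
    using cover_down[OF ps, of i j] that unfolding Uc_def Bk_def YR_def by force
  have h7: "\<exists>c\<in>YR. j < c \<and> c \<le> j+1" if "Uc (i,j)" "Bk (i,j+1)" "\<not> Uc (i,j+1)" for i j
    using cover_up[OF ps, of i j] that unfolding Uc_def Bk_def YR_def by force
  have hS: "\<And>i j. InS (i,j) = (sx \<le> i \<and> i+1 \<le> sx+st \<and> sy \<le> j \<and> j+1 \<le> sy+st)"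
    unfolding InS_def S(2) c by (simp add: block_sub_sq)
  have hSB: "\<And>c. InS c \<Longrightarrow> Bk c" unfolding InS_def Bk_def is_block_def using S(3) by blast
  have Sc: "(x,y) \<in> rect_corners S" if "x = sx \<or> x = sx+st" "y = sy \<or> y = sy+st" for x y
    using corner_in[OF Scb _ _ that] S(1) by simp
  have hsx: "sx \<in> XR" "sx+st \<in> XR" unfolding XR_def using Sc by force+
  have hsy: "sy \<in> YR" "sy+st \<in> YR" unfolding YR_def using Sc by force+
  have adj: "uncovered vs RR p" "uncovered vs RR p1" "adjG vs p p1" using assms(5) unfolding adjGR_def by auto
  obtain Q where Q: "valid_square vs Q" "block p \<subseteq> Q" "block p1 \<subseteq> Q" using adj(3) unfolding adjG_def by blast
  obtain a0 b0 T0 where W0: "T0 \<ge> 1" "validW (is_block vs) a0 b0 T0" "a0 \<le> px" "px < a0+T0" "b0 \<le> py" "py < b0+T0"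
      "a0 \<le> qx" "qx < a0+T0" "b0 \<le> qy" "qy < b0+T0"
    using init_square[OF ov Q(1)] Q(2,3) unfolding p p1 by blast
  obtain a b T where W: "T \<ge> 1" "imax (is_block vs) a b T" "a \<le> px" "px < a+T" "b \<le> py" "py < b+T"
      "a \<le> qx" "qx < a+T" "b \<le> qy" "qy < b+T"
    using exists_imax[OF ov W0] by blast
  have hp: "InS (px,py)" using assms(6) unfolding InS_def p .
  have hq: "Uc (qx,qy)" "\<not> InS (qx,qy)" using adj(2) assms(7) unfolding Uc_def InS_def p1 by auto
  have res: "\<exists>a b T qx qy. T \<ge> 1 \<and> imax Bk a b T \<and> a \<le> px \<and> px < a+T \<and> b \<le> py \<and> py < b+T \<and>
     a \<le> qx \<and> qx < a+T \<and> b \<le> qy \<and> qy < b+T \<and> Uc (qx,qy) \<and> \<not> InS (qx,qy) \<and>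
     (\<exists>x y. (x = a \<or> x = a+T) \<and> (y = b \<or> y = b+T) \<and>
        ((y \<in> Y \<and> (\<exists>x'\<in>real_of_int ` X \<union> XR. \<bar>real_of_int x - x'\<bar> \<le> 1)) \<or>
         (x \<in> X \<and> (\<exists>y'\<in>real_of_int ` Y \<union> YR. \<bar>real_of_int y - y'\<bar> \<le> 1))))"
    by (rule core[where Bk=Bk and Uc=Uc and InS=InS and X=X and Y=Y and XR=XR and YR=YR
          and sx=sx and sy=sy and st=st and a=a and b=b and T=T and px=px and py=py and qx=qx and qy=qy])
      (fact h1 h2 h4 h5 h6 h7 hS hSB hsx hsy hp hq | (use W in \<open>simp add: Bk_def\<close>))+
  then obtain a b T qx qy x y where r: "T \<ge> 1" "imax Bk a b T" "a \<le> px" "px < a+T" "b \<le> py" "py < b+T"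
     "a \<le> qx" "qx < a+T" "b \<le> qy" "qy < b+T" "Uc (qx,qy)" "\<not> InS (qx,qy)"
     "x = a \<or> x = a+T" "y = b \<or> y = b+T"
     "(y \<in> Y \<and> (\<exists>x'\<in>real_of_int ` X \<union> XR. \<bar>real_of_int x - x'\<bar> \<le> 1)) \<or>
         (x \<in> X \<and> (\<exists>y'\<in>real_of_int ` Y \<union> YR. \<bar>real_of_int y - y'\<bar> \<le> 1))"
    by blast
  define Ss where "Ss = sq (rpt (a,b)) (real_of_int T)"
  have maxS: "maximal_square vs Ss" unfolding Ss_def using imax_maximal[OF ov _ r(1)] r(2) unfolding Bk_def by blast
  have bp: "block p \<subseteq> Ss" unfolding Ss_def p using cell_sub_W r(3-6) by blast
  have bq: "block (qx,qy) \<subseteq> Ss" unfolding Ss_def using cell_sub_W r(7-10) by blast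
  have neq: "p \<noteq> (qx,qy)" using hp r(12) unfolding p by auto
  have isq: "is_block vs (qx,qy)" using r(11) unfolding Uc_def uncovered_def by blast
  have isp: "is_block vs p" using adj(1) unfolding uncovered_def by blast
  have adjq: "adjGR vs RR p (qx,qy)"
    unfolding adjGR_def adjG_def using adj(1) r(11) isp isq neq maxS bp bq
    unfolding Uc_def maximal_square_def by blast
  have cS: "rpt (x,y) \<in> rect_corners Ss"
  proof -
    have "Ss = cbox (real_of_int a, real_of_int b) (real_of_int a + real_of_int T, real_of_int b + real_of_int T)"
      unfolding Ss_def sq_def rpt_def by simp
    from corner_in[OF this] show ?thesis using r(1,13,14) unfolding rpt_def by auto
  qed
  have cD: "(x,y) \<in> D_x vs (insert S RR) \<union> D_y vs (insert S RR)"
    using r(15) unfolding D_x_def D_y_def X_def Y_def XR_def YR_def by blast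
  show ?thesis using adjq r(12) maxS bp bq cS cD unfolding InS_def by blast
qed

end
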